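(* Let $T$ be a c.n.u. contraction on $H$. For $\lambda\in\mathbb{C}$ let $W_\lambda=\{(x,\lambda x):x\in H\}\subseteq\mathbb{H}$ and $N_\lambda=W_\lambda\cap A_T^{\perp_s}$. Then for $|\lambda|<1$, $$N_\lambda=\{((I-\lambda T^* )^{-1}f,\ \lambda(I-\lambda T^* )^{-1}f): f\in\mathbb{K}^\perp\},$$ and for $|\lambda|>1$, $$N_\lambda=\{((\lambda-T)^{-1}f,\ \lambda(\lambda-T)^{-1}f): f\in\mathbb{K}_*^\perp\}.$$
   Context: $H$ is an infinite-dimensional separable complex Hilbert space; $T\in\mathbb{B}(H)$ with $\|T\|\le1$ is completely non-unitary (no nonzero invariant subspace on which $T$ is unitary). $\mathbb{K}=\ker(I-T^*T)$, $\mathbb{K}_*=\ker(I-TT^* )$. $\mathbb{H}=H\oplus_\perp H$ with $[(x_1,x_2),(y_1,y_2)]=i(x_1,y_1)_H-i(x_2,y_2)_H$; $S^{\perp_s}=\{a:[a,b]=0\ \forall b\in S\}$; $A_T=\{(x,Tx):x\in\mathbb{K}\}$. *)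

theory Defs
  imports "HOL-Analysis.Analysis"
begin

class complex_inner_space = real_normed_vector +
  fixes scaleC :: "complex \<Rightarrow> 'a \<Rightarrow> 'a"
    and cinner :: "'a \<Rightarrow> 'a \<Rightarrow> complex"
  assumes scaleC_add_right: "scaleC a (x + y) = scaleC a x + scaleC a y"
    and scaleC_add_left: "scaleC (a + b) x = scaleC a x + scaleC b x"
    and scaleC_scaleC: "scaleC a (scaleC b x) = scaleC (a * b) x"
    and scaleC_one: "scaleC 1 x = x"
    and scaleR_scaleC: "scaleR r x = scaleC (complex_of_real r) x"
    and cinner_add_left: "cinner (x + y) z = cinner x z + cinner y z"
    and cinner_scaleC_left: "cinner (scaleC a x) y = a * cinner x y"
    and cinner_commute: "cinner y x = cnj (cinner x y)"
    and cinner_self_norm: "cinner x x = complex_of_real ((norm x)\<^sup>2)"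

definition cspan :: "'a::complex_inner_space set \<Rightarrow> 'a set" where
  "cspan S = {(\<Sum>v\<in>F. scaleC (c v) v) | F c. finite F \<and> F \<subseteq> S}"

definition bounded_clinear_op :: "('a::complex_inner_space \<Rightarrow> 'a) \<Rightarrow> bool" where
  "bounded_clinear_op T \<longleftrightarrow>
     (\<forall>x y. T (x + y) = T x + T y) \<and> (\<forall>c x. T (scaleC c x) = scaleC c (T x)) \<and>
     (\<exists>K. \<forall>x. norm (T x) \<le> norm x * K)"

definition cadjoint :: "('a::complex_inner_space \<Rightarrow> 'a) \<Rightarrow> ('a \<Rightarrow> 'a)" where
  "cadjoint T = (\<lambda>y. THE z. \<forall>x. cinner (T x) y = cinner x z)"

definition contraction :: "('a::complex_inner_space \<Rightarrow> 'a) \<Rightarrow> bool" where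
  "contraction T \<longleftrightarrow> bounded_clinear_op T \<and> (\<forall>x. norm (T x) \<le> norm x)"

definition csubspace :: "'a::complex_inner_space set \<Rightarrow> bool" where
  "csubspace M \<longleftrightarrow> 0 \<in> M \<and> (\<forall>x\<in>M. \<forall>y\<in>M. x + y \<in> M) \<and> (\<forall>c. \<forall>x\<in>M. scaleC c x \<in> M)"

definition completely_non_unitary :: "('a::complex_inner_space \<Rightarrow> 'a) \<Rightarrow> bool" where
  "completely_non_unitary T \<longleftrightarrow>
     \<not> (\<exists>M. csubspace M \<and> closed M \<and> M \<noteq> {0} \<and> T ` M = M \<and> (\<forall>x\<in>M. norm (T x) = norm x))"

definition orth_compl :: "'a::complex_inner_space set \<Rightarrow> 'a set" where
  "orth_compl S = {y. \<forall>x\<in>S. cinner x y = 0}"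

definition defect_K :: "('a::complex_inner_space \<Rightarrow> 'a) \<Rightarrow> 'a set" where
  "defect_K T = {x. x - cadjoint T (T x) = 0}"

definition defect_K_star :: "('a::complex_inner_space \<Rightarrow> 'a) \<Rightarrow> 'a set" where
  "defect_K_star T = {x. x - T (cadjoint T x) = 0}"

definition sform :: "'a::complex_inner_space \<times> 'a \<Rightarrow> 'a \<times> 'a \<Rightarrow> complex" where
  "sform a b = \<i> * cinner (fst a) (fst b) - \<i> * cinner (snd a) (snd b)"

definition s_orth :: "('a::complex_inner_space \<times> 'a) set \<Rightarrow> ('a \<times> 'a) set" where
  "s_orth S = {a. \<forall>b\<in>S. sform a b = 0}"

definition A_T :: "('a::complex_inner_space \<Rightarrow> 'a) \<Rightarrow> ('a \<times> 'a) set" where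
  "A_T T = {(x, T x) | x. x \<in> defect_K T}"

definition W_lam :: "complex \<Rightarrow> ('a::complex_inner_space \<times> 'a) set" where
  "W_lam l = {(x, scaleC l x) | x. True}"

definition N_lam :: "('a::complex_inner_space \<Rightarrow> 'a) \<Rightarrow> complex \<Rightarrow> ('a \<times> 'a) set" where
  "N_lam T l = W_lam l \<inter> s_orth (A_T T)"

end

theory Submission
  imports Defs
begin

lemma mult_cnj_cmod: "z * cnj z = complex_of_real ((cmod z)\<^sup>2)"
  by (simp add: complex_mult_cnj cmod_power2)

lemma scaleC_zero_right[simp]: "scaleC a (0::'a::complex_inner_space) = 0"
proof -
  have "scaleC a (0::'a) = scaleC a 0 + scaleC a 0" using scaleC_add_right[of a "0::'a" 0] by simp
  then show ?thesis by simp
qed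

lemma scaleC_zero_left[simp]: "scaleC 0 (x::'a::complex_inner_space) = 0"
proof -
  have "scaleC 0 x = scaleC 0 x + scaleC 0 x" using scaleC_add_left[of 0 0 x] by simp
  then show ?thesis by simp
qed

lemma scaleC_minus_right: "scaleC a (- x::'a::complex_inner_space) = - scaleC a x"
proof -
  have "scaleC a x + scaleC a (-x) = 0" using scaleC_add_right[of a x "-x"] by simp
  then show ?thesis using add.inverse_unique by metis
qed

lemma scaleC_diff_right: "scaleC a (x - y::'a::complex_inner_space) = scaleC a x - scaleC a y"
  by (simp only: diff_conv_add_uminus scaleC_add_right scaleC_minus_right)

lemma scaleC_minus1: "scaleC (-1) (x::'a::complex_inner_space) = - x"
proof -
  have "scaleR (-1) x = scaleC (complex_of_real (-1)) x" by (rule scaleR_scaleC)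
  then show ?thesis by simp
qed

lemma scaleC_minus_left: "scaleC (-a) (x::'a::complex_inner_space) = - scaleC a x"
proof -
  have "scaleC (-a) x = scaleC (-1) (scaleC a x)" by (simp add: scaleC_scaleC)
  also have "\<dots> = - scaleC a x" by (rule scaleC_minus1)
  finally show ?thesis .
qed

lemma scaleC_diff_left: "scaleC (a - b) (x::'a::complex_inner_space) = scaleC a x - scaleC b x"
  by (simp only: diff_conv_add_uminus scaleC_add_left scaleC_minus_left)

lemma cinner_zero_left[simp]: "cinner (0::'a::complex_inner_space) y = 0"
proof -
  have "cinner (scaleC 0 (0::'a)) y = 0 * cinner 0 y" by (rule cinner_scaleC_left)
  then show ?thesis by simp
qed

lemma cinner_minus_left: "cinner (- x::'a::complex_inner_space) y = - cinner x y"
proof -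
  have "cinner (-x) y = cinner (scaleC (-1) x) y" by (simp only: scaleC_minus1)
  also have "\<dots> = (-1) * cinner x y" by (rule cinner_scaleC_left)
  finally show ?thesis by simp
qed

lemma cinner_diff_left: "cinner (x - z::'a::complex_inner_space) y = cinner x y - cinner z y"
  by (simp only: diff_conv_add_uminus cinner_add_left cinner_minus_left)

lemma cinner_add_right: "cinner (y::'a::complex_inner_space) (x + z) = cinner y x + cinner y z"
proof -
  have "cinner y (x + z) = cnj (cinner (x + z) y)" by (rule cinner_commute)
  also have "\<dots> = cnj (cinner x y) + cnj (cinner z y)" by (simp add: cinner_add_left)
  finally show ?thesis by (simp add: cinner_commute[of x y] cinner_commute[of z y])
qed

lemma cinner_scaleC_right: "cinner (y::'a::complex_inner_space) (scaleC a x) = cnj a * cinner y x"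
proof -
  have "cinner y (scaleC a x) = cnj (cinner (scaleC a x) y)" by (rule cinner_commute)
  also have "\<dots> = cnj a * cnj (cinner x y)" by (simp add: cinner_scaleC_left)
  finally show ?thesis by (simp add: cinner_commute[of x y])
qed

lemma cinner_zero_right[simp]: "cinner (y::'a::complex_inner_space) 0 = 0"
proof -
  have "cinner y 0 = cnj (cinner 0 y)" by (rule cinner_commute)
  then show ?thesis by simp
qed

lemma cinner_diff_right: "cinner (y::'a::complex_inner_space) (x - z) = cinner y x - cinner y z"
proof -
  have "cinner y (x - z) = cnj (cinner (x - z) y)" by (rule cinner_commute)
  also have "\<dots> = cnj (cinner x y) - cnj (cinner z y)" by (simp add: cinner_diff_left)
  finally show ?thesis by (simp add: cinner_commute[of x y] cinner_commute[of z y])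
qed

lemma cinner_self_eq_0: "cinner (x::'a::complex_inner_space) x = 0 \<longleftrightarrow> x = 0"
  by (simp add: cinner_self_norm)

lemma norm_scaleC: "norm (scaleC a (x::'a::complex_inner_space)) = cmod a * norm x"
proof -
  have "cinner (scaleC a x) (scaleC a x) = a * cnj a * cinner x x"
    by (simp add: cinner_scaleC_left cinner_scaleC_right mult.assoc)
  then have "complex_of_real ((norm (scaleC a x))\<^sup>2) = complex_of_real ((cmod a)\<^sup>2 * (norm x)\<^sup>2)"
    by (simp only: cinner_self_norm mult_cnj_cmod of_real_mult)
  then have "(norm (scaleC a x))\<^sup>2 = (cmod a * norm x)\<^sup>2"
    by (simp only: of_real_eq_iff power_mult_distrib)
  then show ?thesis by (simp add: power2_eq_iff_nonneg)
qed

lemma norm_add_sq: "(norm (x + y::'a::complex_inner_space))\<^sup>2 = (norm x)\<^sup>2 + (norm y)\<^sup>2 + 2 * Re (cinner x y)"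
proof -
  have "cinner (x+y) (x+y) = cinner x x + cinner y y + (cinner x y + cnj (cinner x y))"
    by (simp add: cinner_add_left cinner_add_right cinner_commute[of x y])
  then have "Re (cinner (x+y) (x+y)) = Re (cinner x x) + Re (cinner y y) + 2 * Re (cinner x y)"
    by simp
  then show ?thesis by (simp add: cinner_self_norm)
qed

lemma norm_diff_scaleC_sq: "(norm (x - scaleC t y::'a::complex_inner_space))\<^sup>2 =
   (norm x)\<^sup>2 + (cmod t)\<^sup>2 * (norm y)\<^sup>2 - 2 * Re (cnj t * cinner x y)"
proof -
  have e: "x - scaleC t y = x + scaleC (-t) y" by (simp add: scaleC_minus_left)
  have "(norm (x - scaleC t y))\<^sup>2 = (norm x)\<^sup>2 + (norm (scaleC (-t) y))\<^sup>2 + 2 * Re (cinner x (scaleC (-t) y))"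
    unfolding e by (rule norm_add_sq)
  also have "\<dots> = (norm x)\<^sup>2 + (cmod t)\<^sup>2 * (norm y)\<^sup>2 - 2 * Re (cnj t * cinner x y)"
    by (simp only: norm_scaleC cinner_scaleC_right power_mult_distrib norm_minus_cancel complex_cnj_minus
       mult_minus_left uminus_complex.sel(1))
  finally show ?thesis .
qed

lemma cauchy_schwarz: "cmod (cinner (x::'a::complex_inner_space) y) \<le> norm x * norm y"
proof (cases "y = 0")
  case True then show ?thesis by simp
next
  case False
  define n2 where "n2 = (norm y)\<^sup>2"
  have ny: "n2 > 0" using False unfolding n2_def by simp
  define c where "c = cinner x y"
  define t where "t = c / complex_of_real n2"
  have "0 \<le> (norm (x - scaleC t y))\<^sup>2" by simp
  also have "\<dots> = (norm x)\<^sup>2 - (cmod c)\<^sup>2 / n2"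
  proof -
    have ct: "cmod t = cmod c / n2" unfolding t_def using ny by (simp add: norm_divide)
    have a: "(cmod t)\<^sup>2 * (norm y)\<^sup>2 = (cmod c)\<^sup>2 / n2"
      unfolding ct n2_def[symmetric] using ny by (simp add: power_divide power2_eq_square)
    have "cnj t * c = (c * cnj c) / complex_of_real n2"
      unfolding t_def complex_cnj_divide complex_cnj_complex_of_real by (simp add: mult.commute)
    also have "\<dots> = complex_of_real ((cmod c)\<^sup>2 / n2)"
      by (simp only: mult_cnj_cmod of_real_divide)
    finally have "cnj t * c = complex_of_real ((cmod c)\<^sup>2 / n2)" .
    then have b: "Re (cnj t * c) = (cmod c)\<^sup>2 / n2" by simp
    show ?thesis unfolding norm_diff_scaleC_sq c_def[symmetric] a b by simp
  qed
  finally have "(cmod c)\<^sup>2 / n2 \<le> (norm x)\<^sup>2" by linarith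
  then have "(cmod c)\<^sup>2 \<le> (norm x)\<^sup>2 * n2" using pos_divide_le_eq[OF ny] by blast
  then have "(cmod c)\<^sup>2 \<le> (norm x * norm y)\<^sup>2" unfolding n2_def by (simp only: power_mult_distrib)
  then show ?thesis unfolding c_def by (rule power2_le_imp_le) simp
qed



lemma cinner_minus_right: "cinner (y::'a::complex_inner_space) (- x) = - cinner y x"
  by (metis cinner_diff_right cinner_zero_right diff_0)

lemma parallelogram: "(norm (x + y::'a::complex_inner_space))\<^sup>2 + (norm (x - y))\<^sup>2 = 2 * (norm x)\<^sup>2 + 2 * (norm y)\<^sup>2"
proof -
  have "(norm (x - y))\<^sup>2 = (norm x)\<^sup>2 + (norm y)\<^sup>2 - 2 * Re (cinner x y)"
    using norm_add_sq[of x "-y"] by (simp add: cinner_minus_right)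
  then show ?thesis using norm_add_sq[of x y] by linarith
qed

lemma cinner_ext: "(\<And>x. cinner x z1 = cinner x (z2::'a::complex_inner_space)) \<Longrightarrow> z1 = z2"
proof -
  assume h: "\<And>x. cinner x z1 = cinner x z2"
  have "cinner (z1 - z2) (z1 - z2) = 0" by (simp add: cinner_diff_right h)
  then show ?thesis by (simp add: cinner_self_eq_0)
qed

lemma csubspace_diff: "csubspace N \<Longrightarrow> x \<in> N \<Longrightarrow> y \<in> N \<Longrightarrow> x - y \<in> N"
proof -
  assume a: "csubspace N" "x \<in> N" "y \<in> N"
  have "scaleC (-1) y \<in> N" using a unfolding csubspace_def by blast
  then have "x + scaleC (-1) y \<in> N" using a unfolding csubspace_def by blast
  then show ?thesis by (simp add: scaleC_minus1)
qed

lemma orth_vector_exists: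
  fixes N :: "'a::{complex_inner_space, complete_space} set"
  assumes sub: "csubspace N" and cl: "closed N" and w: "w \<notin> N"
  shows "\<exists>u. u \<noteq> 0 \<and> (\<forall>m\<in>N. cinner u m = 0)"
proof -
  have N0: "0 \<in> N" and Nadd: "\<And>x y. x \<in> N \<Longrightarrow> y \<in> N \<Longrightarrow> x + y \<in> N"
    and Nsc: "\<And>c x. x \<in> N \<Longrightarrow> scaleC c x \<in> N" using sub unfolding csubspace_def by auto
  have Nne: "N \<noteq> {}" using N0 by auto
  define d where "d = infdist w N"
  have d0: "0 \<le> d" unfolding d_def by (rule infdist_nonneg)
  have low: "\<And>m. m \<in> N \<Longrightarrow> d \<le> norm (w - m)"
    unfolding d_def by (metis infdist_le dist_norm)
  have ex: "\<forall>n::nat. \<exists>a. a \<in> N \<and> (norm (w - a))\<^sup>2 < d\<^sup>2 + inverse (real (Suc n))"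
  proof
    fix n :: nat
    define r where "r = sqrt (d\<^sup>2 + inverse (real (Suc n)))"
    have "d = sqrt (d\<^sup>2)" using d0 by simp
    also have "\<dots> < r" unfolding r_def by (intro real_sqrt_less_mono) simp
    finally have "infdist w N < r" unfolding d_def .
    then have "Inf ((\<lambda>a. dist w a) ` N) < r" using infdist_notempty[OF Nne] by simp
    then obtain a where a: "a \<in> N" "dist w a < r"
      using cInf_lessD[of "(\<lambda>a. dist w a) ` N" r] Nne by auto
    have "(norm (w - a))\<^sup>2 < r\<^sup>2" using a(2) by (simp add: dist_norm power_strict_mono)
    also have "r\<^sup>2 = d\<^sup>2 + inverse (real (Suc n))" unfolding r_def by simp
    finally show "\<exists>a. a \<in> N \<and> (norm (w - a))\<^sup>2 < d\<^sup>2 + inverse (real (Suc n))" using a(1) by blast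
  qed
  then obtain a where aN: "\<And>n. a n \<in> N" and ab: "\<And>n. (norm (w - a n))\<^sup>2 < d\<^sup>2 + inverse (real (Suc n))"
    by metis
  have bound: "(norm (a j - a k))\<^sup>2 \<le> 2 * inverse (real (Suc j)) + 2 * inverse (real (Suc k))" for j k
  proof -
    define x where "x = w - a j"
    define y where "y = w - a k"
    define mid where "mid = scaleR (1/2) (a j + a k)"
    have midN: "mid \<in> N" unfolding mid_def scaleR_scaleC by (intro Nsc Nadd aN)
    have "x + y = scaleR 2 (w - mid)" unfolding x_def y_def mid_def by (simp add: algebra_simps scaleR_2)
    then have "norm (x + y) = 2 * norm (w - mid)" by simp
    then have "2 * d \<le> norm (x + y)" using low[OF midN] by simp
    then have "(2 * d)\<^sup>2 \<le> (norm (x + y))\<^sup>2" using d0 by (intro power_mono) auto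
    moreover have "x - y = a k - a j" unfolding x_def y_def by simp
    moreover have "norm (a k - a j) = norm (a j - a k)" by (rule norm_minus_commute)
    ultimately show ?thesis using parallelogram[of x y] ab[of j] ab[of k]
      unfolding x_def[symmetric] y_def[symmetric] by (simp add: power_mult_distrib)
  qed
  have cauchy: "Cauchy a"
  proof (rule metric_CauchyI)
    fix e :: real assume e: "e > 0"
    obtain M :: nat where M: "inverse (e\<^sup>2 / 4) < real M" using reals_Archimedean2 by blast
    have e2: "e\<^sup>2 / 4 > 0" using e by simp
    have Mi: "4 * inverse (real (Suc M)) < e\<^sup>2"
    proof -
      have "inverse (real (Suc M)) < inverse (inverse (e\<^sup>2 / 4))"
        using M e2 by (intro less_imp_inverse_less) auto
      then show ?thesis using e2 by simp
    qed
    show "\<exists>M. \<forall>m\<ge>M. \<forall>n\<ge>M. dist (a m) (a n) < e"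
    proof (intro exI allI impI)
      fix m n assume mn: "M \<le> m" "M \<le> n"
      have "inverse (real (Suc m)) \<le> inverse (real (Suc M))" using mn by (simp add: le_imp_inverse_le)
      moreover have "inverse (real (Suc n)) \<le> inverse (real (Suc M))" using mn by (simp add: le_imp_inverse_le)
      ultimately have "(norm (a m - a n))\<^sup>2 < e\<^sup>2" using bound[of m n] Mi by linarith
      then have "norm (a m - a n) < e" using e by (smt (verit) power_mono norm_ge_zero)
      then show "dist (a m) (a n) < e" by (simp add: dist_norm)
    qed
  qed
  then obtain aa where lim: "a \<longlonglongrightarrow> aa" using Cauchy_convergent_iff convergent_def by blast
  have aaN: "aa \<in> N" using closed_sequentially[OF cl] aN lim by blast
  have "(norm (w - aa))\<^sup>2 \<le> d\<^sup>2"
  proof (rule LIMSEQ_le)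
    show "(\<lambda>n. (norm (w - a n))\<^sup>2) \<longlonglongrightarrow> (norm (w - aa))\<^sup>2" by (intro tendsto_intros lim)
    show "(\<lambda>n. d\<^sup>2 + inverse (real (Suc n))) \<longlonglongrightarrow> d\<^sup>2"
      using tendsto_add[OF tendsto_const LIMSEQ_inverse_real_of_nat, of "d\<^sup>2"] by simp
    show "\<exists>N. \<forall>n\<ge>N. (norm (w - a n))\<^sup>2 \<le> d\<^sup>2 + inverse (real (Suc n))"
      using ab less_imp_le by blast
  qed
  then have uled: "norm (w - aa) \<le> d" using d0 by (simp add: power2_le_iff_abs_le)
  define u where "u = w - aa"
  have u0: "u \<noteq> 0" using w aaN unfolding u_def by auto
  have umin: "(norm u)\<^sup>2 \<le> (norm (u - m))\<^sup>2" if "m \<in> N" for m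
  proof -
    have "u - m = w - (aa + m)" unfolding u_def by simp
    then have "d \<le> norm (u - m)" using low[OF Nadd[OF aaN that]] by metis
    then have "norm u \<le> norm (u - m)" using uled unfolding u_def by simp
    then show ?thesis by (intro power_mono) auto
  qed
  have "cinner u m = 0" if mN: "m \<in> N" for m
  proof -
    define c where "c = cinner u m"
    define q where "q = (norm m)\<^sup>2"
    define s where "s = 1 / (q + 1)"
    define C where "C = (cmod c)\<^sup>2"
    have q0: "q \<ge> 0" unfolding q_def by simp
    have s0: "s > 0" unfolding s_def using q0 by simp
    have sq: "s * q < 1" unfolding s_def using q0 by simp
    have C0: "C \<ge> 0" unfolding C_def by simp
    define t where "t = complex_of_real s * c"
    have "(norm u)\<^sup>2 \<le> (norm (u - scaleC t m))\<^sup>2" using umin Nsc[OF mN] by blast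
    also have "\<dots> = (norm u)\<^sup>2 + s\<^sup>2 * C * q - 2 * (s * C)"
    proof -
      have "(cmod t)\<^sup>2 = s\<^sup>2 * C" unfolding t_def C_def using s0 by (simp add: norm_mult power_mult_distrib)
      moreover have "cnj t * c = complex_of_real (s * C)"
      proof -
        have "cnj t * c = complex_of_real s * (c * cnj c)" unfolding t_def by simp
        also have "\<dots> = complex_of_real s * complex_of_real C" unfolding C_def by (simp only: mult_cnj_cmod)
        finally show ?thesis by simp
      qed
      ultimately show ?thesis unfolding norm_diff_scaleC_sq c_def[symmetric] q_def by simp
    qed
    finally have h: "0 \<le> s * C * (s * q) - 2 * (s * C)" by (simp add: power2_eq_square algebra_simps)
    have "s * C * (s * q) \<le> s * C" using sq s0 C0 by (simp add: mult_left_le)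
    then have "s * C \<le> 0" using h by linarith
    then have "C \<le> 0" using s0 by (simp add: mult_le_0_iff)
    then have "C = 0" using C0 by simp
    then show ?thesis unfolding C_def c_def by simp
  qed
  then show ?thesis using u0 by blast
qed



lemma riesz:
  fixes phi :: "'a::{complex_inner_space, complete_space} \<Rightarrow> complex"
  assumes add: "\<And>x y. phi (x + y) = phi x + phi y"
    and sc: "\<And>c x. phi (scaleC c x) = c * phi x"
    and bd: "\<And>x. cmod (phi x) \<le> norm x * K"
  shows "\<exists>z. \<forall>x. phi x = cinner x z"
proof (cases "\<forall>x. phi x = 0")
  case True then show ?thesis by (intro exI[of _ 0]) simp
next
  case False
  then obtain w where pw: "phi w \<noteq> 0" by blast
  have diff: "phi (x - y) = phi x - phi y" for x y
  proof -
    have "phi (x - y) + phi y = phi x" using add[of "x - y" y] by simp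
    then show ?thesis by (simp add: eq_diff_eq)
  qed
  have p0: "phi 0 = 0" using sc[of 0 0] by simp
  define N where "N = {x. phi x = 0}"
  have sub: "csubspace N" unfolding csubspace_def N_def using add sc p0 by simp
  define K' where "K' = abs K + 1"
  have K': "K' > 0" unfolding K'_def by simp
  have bd': "cmod (phi x) \<le> norm x * K'" for x
  proof -
    have "norm x * K \<le> norm x * K'" unfolding K'_def by (intro mult_left_mono) auto
    then show ?thesis using bd[of x] by linarith
  qed
  have cont: "continuous_on UNIV phi"
    unfolding continuous_on_iff
  proof (intro ballI allI impI)
    fix x :: 'a and e :: real assume e: "e > 0"
    show "\<exists>d>0. \<forall>x'\<in>UNIV. dist x' x < d \<longrightarrow> dist (phi x') (phi x) < e"
    proof (intro exI[of _ "e / K'"] conjI ballI impI)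
      show "e / K' > 0" using e K' by simp
      fix x' assume "dist x' x < e / K'"
      then have "norm (x' - x) * K' < e" using K' by (simp add: dist_norm pos_less_divide_eq)
      moreover have "dist (phi x') (phi x) = cmod (phi (x' - x))" by (simp add: dist_norm diff)
      ultimately show "dist (phi x') (phi x) < e" using bd'[of "x' - x"] by linarith
    qed
  qed
  have cl: "closed N" unfolding N_def using closed_Collect_eq[OF cont continuous_on_const] by simp
  have wN: "w \<notin> N" using pw N_def by simp
  obtain u where u0: "u \<noteq> 0" and u: "\<And>m. m \<in> N \<Longrightarrow> cinner u m = 0"
    using orth_vector_exists[OF sub cl wN] by blast
  have uu: "cinner u u \<noteq> 0" using u0 cinner_self_eq_0 by blast
  have pu: "phi u \<noteq> 0"
  proof
    assume "phi u = 0"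
    then have "u \<in> N" unfolding N_def by simp
    then show False using u uu by blast
  qed
  show ?thesis
  proof (intro exI allI)
    fix x
    define m where "m = x - scaleC (phi x / phi u) u"
    have "phi m = 0" unfolding m_def diff sc using pu by simp
    then have "cinner u m = 0" using u N_def by simp
    then have "cinner m u = 0" using cinner_commute[of u m] by simp
    then have "cinner x u = (phi x / phi u) * cinner u u"
      unfolding m_def cinner_diff_left cinner_scaleC_left by simp
    then show "phi x = cinner x (scaleC (cnj (phi u / cinner u u)) u)"
      unfolding cinner_scaleC_right using pu uu by (simp add: field_simps)
  qed
qed

lemma T_add: "contraction T \<Longrightarrow> T (x + y) = T x + T y"
  unfolding contraction_def bounded_clinear_op_def by blast
lemma T_sc: "contraction T \<Longrightarrow> T (scaleC c x) = scaleC c (T x)"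
  unfolding contraction_def bounded_clinear_op_def by blast
lemma T_norm: "contraction T \<Longrightarrow> norm (T x) \<le> norm x"
  unfolding contraction_def by blast
lemma T_diff: "contraction T \<Longrightarrow> T (x - y) = T x - T y"
proof -
  assume c: "contraction T"
  have "T (x - y) + T y = T x" using T_add[OF c, of "x - y" y] by simp
  then show ?thesis by (simp add: eq_diff_eq)
qed

lemma adjoint_eq:
  fixes T :: "'a::{complex_inner_space, complete_space} \<Rightarrow> 'a"
  assumes c: "contraction T"
  shows "cinner (T x) y = cinner x (cadjoint T y)"
proof -
  have ex: "\<exists>z. \<forall>x. cinner (T x) y = cinner x z"
  proof (rule riesz[where K = "norm y"])
    show "cinner (T (a + b)) y = cinner (T a) y + cinner (T b) y" for a b
      by (simp add: T_add[OF c] cinner_add_left)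
    show "cinner (T (scaleC k a)) y = k * cinner (T a) y" for k a
      by (simp add: T_sc[OF c] cinner_scaleC_left)
    show "cmod (cinner (T a) y) \<le> norm a * norm y" for a
    proof -
      have "norm (T a) * norm y \<le> norm a * norm y" using T_norm[OF c] by (intro mult_right_mono) auto
      then show ?thesis using cauchy_schwarz[of "T a" y] by linarith
    qed
  qed
  have "\<exists>!z. \<forall>x. cinner (T x) y = cinner x z"
  proof -
    from ex obtain z where z: "\<forall>x. cinner (T x) y = cinner x z" by blast
    show ?thesis
    proof (rule ex1I[of _ z])
      show "\<forall>x. cinner (T x) y = cinner x z" by (rule z)
      fix z' assume "\<forall>x. cinner (T x) y = cinner x z'"
      then show "z' = z" using z by (intro cinner_ext) simp
    qed
  qed
  then have "\<forall>x. cinner (T x) y = cinner x (THE z. \<forall>x. cinner (T x) y = cinner x z)" by (rule theI')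
  then have "cinner (T x) y = cinner x (THE z. \<forall>x. cinner (T x) y = cinner x z)" by blast
  then show ?thesis unfolding cadjoint_def .
qed

lemma adj_add:
  fixes T :: "'a::{complex_inner_space, complete_space} \<Rightarrow> 'a"
  assumes c: "contraction T"
  shows "cadjoint T (a + b) = cadjoint T a + cadjoint T b"
proof (rule cinner_ext)
  fix x
  have "cinner x (cadjoint T (a + b)) = cinner (T x) (a + b)" by (rule adjoint_eq[OF c, symmetric])
  also have "\<dots> = cinner (T x) a + cinner (T x) b" by (rule cinner_add_right)
  also have "\<dots> = cinner x (cadjoint T a) + cinner x (cadjoint T b)" by (simp only: adjoint_eq[OF c])
  also have "\<dots> = cinner x (cadjoint T a + cadjoint T b)" by (rule cinner_add_right[symmetric])
  finally show "cinner x (cadjoint T (a + b)) = cinner x (cadjoint T a + cadjoint T b)" .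
qed

lemma adj_diff:
  fixes T :: "'a::{complex_inner_space, complete_space} \<Rightarrow> 'a"
  assumes c: "contraction T"
  shows "cadjoint T (a - b) = cadjoint T a - cadjoint T b"
proof (rule cinner_ext)
  fix x
  have "cinner x (cadjoint T (a - b)) = cinner (T x) (a - b)" by (rule adjoint_eq[OF c, symmetric])
  also have "\<dots> = cinner (T x) a - cinner (T x) b" by (rule cinner_diff_right)
  also have "\<dots> = cinner x (cadjoint T a) - cinner x (cadjoint T b)" by (simp only: adjoint_eq[OF c])
  also have "\<dots> = cinner x (cadjoint T a - cadjoint T b)" by (rule cinner_diff_right[symmetric])
  finally show "cinner x (cadjoint T (a - b)) = cinner x (cadjoint T a - cadjoint T b)" .
qed

lemma adj_sc:
  fixes T :: "'a::{complex_inner_space, complete_space} \<Rightarrow> 'a"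
  assumes c: "contraction T"
  shows "cadjoint T (scaleC k a) = scaleC k (cadjoint T a)"
proof (rule cinner_ext)
  fix x
  have "cinner x (cadjoint T (scaleC k a)) = cinner (T x) (scaleC k a)" by (rule adjoint_eq[OF c, symmetric])
  also have "\<dots> = cnj k * cinner (T x) a" by (rule cinner_scaleC_right)
  also have "\<dots> = cnj k * cinner x (cadjoint T a)" by (simp only: adjoint_eq[OF c])
  also have "\<dots> = cinner x (scaleC k (cadjoint T a))" by (rule cinner_scaleC_right[symmetric])
  finally show "cinner x (cadjoint T (scaleC k a)) = cinner x (scaleC k (cadjoint T a))" .
qed

lemma adj_norm:
  fixes T :: "'a::{complex_inner_space, complete_space} \<Rightarrow> 'a"
  assumes c: "contraction T"
  shows "norm (cadjoint T y) \<le> norm y"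
proof -
  define z where "z = cadjoint T y"
  have "(norm z)\<^sup>2 = Re (cinner z z)" by (simp add: cinner_self_norm)
  also have "cinner z z = cinner (T z) y" unfolding z_def by (simp add: adjoint_eq[OF c])
  also have "Re (cinner (T z) y) \<le> norm (T z) * norm y"
    using cauchy_schwarz[of "T z" y] complex_Re_le_cmod by (rule order_trans[rotated])
  also have "\<dots> \<le> norm z * norm y" using T_norm[OF c] by (intro mult_right_mono) auto
  finally have h: "(norm z)\<^sup>2 \<le> norm z * norm y" .
  show ?thesis
  proof (cases "norm z = 0")
    case True then show ?thesis unfolding z_def by simp
  next
    case False
    then have "norm z > 0" by simp
    with h show ?thesis unfolding z_def[symmetric] by (simp add: power2_eq_square)
  qed
qed



lemma N_lam_mem: "(x, scaleC l x) \<in> N_lam T l \<longleftrightarrow> (\<forall>k\<in>defect_K T. sform (x, scaleC l x) (k, T k) = 0)"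
  unfolding N_lam_def W_lam_def s_orth_def A_T_def by auto

lemma N_lam_form: "p \<in> N_lam T l \<Longrightarrow> \<exists>x. p = (x, scaleC l x)"
  unfolding N_lam_def W_lam_def by auto

lemma sform_eq: "sform (x, scaleC l x) (k, T k) = \<i> * (cinner x k - l * cinner x (T k))"
  unfolding sform_def by (simp add: cinner_scaleC_left right_diff_distrib)

lemma image_char:
  assumes ex1: "\<And>f. \<exists>!x. g x = f"
    and mem: "\<And>x. (x, scaleC l x) \<in> N \<longleftrightarrow> g x \<in> S"
    and form: "\<And>p. p \<in> N \<Longrightarrow> \<exists>x. p = (x, scaleC l x)"
  shows "N = (\<lambda>f. (inv g f, scaleC l (inv g f))) ` S"
proof -
  have gi: "g (inv g f) = f" for f
  proof -
    have "surj g" using ex1 by (metis surjI)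
    then show ?thesis by (rule surj_f_inv_f)
  qed
  have ig: "inv g (g x) = x" for x
  proof -
    have "inj g" unfolding inj_def using ex1 by metis
    then show ?thesis by (rule inv_f_f)
  qed
  show ?thesis
  proof
    show "N \<subseteq> (\<lambda>f. (inv g f, scaleC l (inv g f))) ` S"
    proof
      fix p assume p: "p \<in> N"
      then obtain x where px: "p = (x, scaleC l x)" using form by blast
      then have "g x \<in> S" using mem p by simp
      moreover have "p = (inv g (g x), scaleC l (inv g (g x)))" using px ig by simp
      ultimately show "p \<in> (\<lambda>f. (inv g f, scaleC l (inv g f))) ` S" by blast
    qed
    show "(\<lambda>f. (inv g f, scaleC l (inv g f))) ` S \<subseteq> N"
    proof
      fix p assume "p \<in> (\<lambda>f. (inv g f, scaleC l (inv g f))) ` S"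
      then obtain f where f: "f \<in> S" "p = (inv g f, scaleC l (inv g f))" by blast
      have "g (inv g f) \<in> S" using f gi by simp
      then show "p \<in> N" using mem f(2) by simp
    qed
  qed
qed

lemma cinner_T_right:
  fixes T :: "'a::{complex_inner_space, complete_space} \<Rightarrow> 'a"
  assumes c: "contraction T"
  shows "cinner x (T k) = cinner (cadjoint T x) k"
proof -
  have "cinner x (T k) = cnj (cinner (T k) x)" by (rule cinner_commute)
  also have "\<dots> = cnj (cinner k (cadjoint T x))" by (simp only: adjoint_eq[OF c])
  also have "\<dots> = cinner (cadjoint T x) k" by (rule cinner_commute[symmetric])
  finally show ?thesis .
qed

lemma orth_mem: "y \<in> orth_compl S \<longleftrightarrow> (\<forall>k\<in>S. cinner y k = 0)"
proof -
  have "cinner k y = 0 \<longleftrightarrow> cinner y k = 0" for k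
    using cinner_commute[of y k] by (metis complex_cnj_zero_iff)
  then show ?thesis unfolding orth_compl_def by simp
qed

lemma part1:
  fixes T :: "'a::{complex_inner_space, complete_space} \<Rightarrow> 'a"
  assumes c: "contraction T" and l: "cmod l < 1"
  shows "N_lam T l = (\<lambda>f. (inv (\<lambda>x. x - scaleC l (cadjoint T x)) f,
                              scaleC l (inv (\<lambda>x. x - scaleC l (cadjoint T x)) f)))
                        ` orth_compl (defect_K T)"
proof (rule image_char)
  show "\<exists>!x. x - scaleC l (cadjoint T x) = f" for f
  proof -
    define F where "F x = f + scaleC l (cadjoint T x)" for x
    have "\<exists>!x. F x = x"
    proof (rule banach_fix_type)
      show "0 \<le> cmod l" by simp
      show "cmod l < 1" by (rule l)
      show "\<forall>x y. dist (F x) (F y) \<le> cmod l * dist x y"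
      proof (intro allI)
        fix x y
        have "F x - F y = scaleC l (cadjoint T (x - y))"
          unfolding F_def adj_diff[OF c] scaleC_diff_right by simp
        then have "dist (F x) (F y) = cmod l * norm (cadjoint T (x - y))"
          by (simp add: dist_norm norm_scaleC)
        also have "\<dots> \<le> cmod l * norm (x - y)" using adj_norm[OF c] by (intro mult_left_mono) auto
        finally show "dist (F x) (F y) \<le> cmod l * dist x y" by (simp add: dist_norm)
      qed
    qed
    moreover have "F x = x \<longleftrightarrow> x - scaleC l (cadjoint T x) = f" for x
      unfolding F_def by (auto simp: algebra_simps)
    ultimately show ?thesis by simp
  qed
  show "(x, scaleC l x) \<in> N_lam T l \<longleftrightarrow> x - scaleC l (cadjoint T x) \<in> orth_compl (defect_K T)" for x
  proof -
    have "sform (x, scaleC l x) (k, T k) = \<i> * cinner (x - scaleC l (cadjoint T x)) k" for k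
      unfolding sform_eq cinner_T_right[OF c] cinner_diff_left cinner_scaleC_left ..
    then show ?thesis unfolding N_lam_mem orth_mem by simp
  qed
  show "\<And>p. p \<in> N_lam T l \<Longrightarrow> \<exists>x. p = (x, scaleC l x)" by (rule N_lam_form)
qed

lemma part2:
  fixes T :: "'a::{complex_inner_space, complete_space} \<Rightarrow> 'a"
  assumes c: "contraction T" and l: "cmod l > 1"
  shows "N_lam T l = (\<lambda>f. (inv (\<lambda>x. scaleC l x - T x) f,
                              scaleC l (inv (\<lambda>x. scaleC l x - T x) f)))
                        ` orth_compl (defect_K_star T)"
proof (rule image_char)
  have l0: "l \<noteq> 0" using l by auto
  show "\<exists>!x. scaleC l x - T x = f" for f
  proof -
    define F where "F x = scaleC (1 / l) (f + T x)" for x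
    have "\<exists>!x. F x = x"
    proof (rule banach_fix_type)
      show "0 \<le> cmod (1 / l)" by simp
      show "cmod (1 / l) < 1" using l by (simp add: norm_divide divide_less_eq_1)
      show "\<forall>x y. dist (F x) (F y) \<le> cmod (1 / l) * dist x y"
      proof (intro allI)
        fix x y
        have e: "(f + T x) - (f + T y) = T (x - y)" by (simp add: T_diff[OF c])
        have "F x - F y = scaleC (1 / l) (T (x - y))"
          unfolding F_def scaleC_diff_right[symmetric] e ..
        then have "dist (F x) (F y) = cmod (1 / l) * norm (T (x - y))"
          by (simp add: dist_norm norm_scaleC)
        also have "\<dots> \<le> cmod (1 / l) * norm (x - y)" using T_norm[OF c] by (intro mult_left_mono) auto
        finally show "dist (F x) (F y) \<le> cmod (1 / l) * dist x y" by (simp add: dist_norm)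
      qed
    qed
    moreover have "F x = x \<longleftrightarrow> scaleC l x - T x = f" for x
    proof
      assume "F x = x"
      then have "scaleC l x = scaleC l (scaleC (1 / l) (f + T x))" unfolding F_def by simp
      also have "\<dots> = f + T x" using l0 by (simp add: scaleC_scaleC scaleC_one)
      finally show "scaleC l x - T x = f" by simp
    next
      assume "scaleC l x - T x = f"
      then have "f + T x = scaleC l x" by (simp add: algebra_simps)
      then have "F x = scaleC (1 / l) (scaleC l x)" unfolding F_def by simp
      also have "\<dots> = x" using l0 by (simp add: scaleC_scaleC scaleC_one)
      finally show "F x = x" .
    qed
    ultimately show ?thesis by simp
  qed
  show "(x, scaleC l x) \<in> N_lam T l \<longleftrightarrow> scaleC l x - T x \<in> orth_compl (defect_K_star T)" for x
  proof -
    let ?Ts = "cadjoint T"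
    have key: "cinner (scaleC l x - T x) m = l * cinner x m - cinner x (?Ts m)" for m
      by (simp add: cinner_diff_left cinner_scaleC_left adjoint_eq[OF c])
    show ?thesis
    proof
      assume h: "(x, scaleC l x) \<in> N_lam T l"
      show "scaleC l x - T x \<in> orth_compl (defect_K_star T)"
        unfolding orth_mem
      proof
        fix m assume m: "m \<in> defect_K_star T"
        then have m1: "T (?Ts m) = m" unfolding defect_K_star_def by simp
        have "?Ts m - ?Ts (T (?Ts m)) = 0" using m1 by simp
        then have "?Ts m \<in> defect_K T" unfolding defect_K_def by simp
        then have "sform (x, scaleC l x) (?Ts m, T (?Ts m)) = 0" using h N_lam_mem by blast
        moreover have "sform (x, scaleC l x) (?Ts m, T (?Ts m)) = \<i> * (cinner x (?Ts m) - l * cinner x (T (?Ts m)))"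
          by (rule sform_eq)
        ultimately have "cinner x (?Ts m) - l * cinner x m = 0" unfolding m1 by simp
        then show "cinner (scaleC l x - T x) m = 0" unfolding key by simp
      qed
    next
      assume h: "scaleC l x - T x \<in> orth_compl (defect_K_star T)"
      show "(x, scaleC l x) \<in> N_lam T l"
        unfolding N_lam_mem
      proof
        fix k assume k: "k \<in> defect_K T"
        then have k1: "?Ts (T k) = k" unfolding defect_K_def by simp
        have "T k - T (?Ts (T k)) = 0" using k1 by simp
        then have "T k \<in> defect_K_star T" unfolding defect_K_star_def by simp
        then have "cinner (scaleC l x - T x) (T k) = 0" using h orth_mem by blast
        then have "l * cinner x (T k) - cinner x k = 0" unfolding key k1 .
        then show "sform (x, scaleC l x) (k, T k) = 0" unfolding sform_eq by (simp add: algebra_simps)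
      qed
    qed
  qed
  show "\<And>p. p \<in> N_lam T l \<Longrightarrow> \<exists>x. p = (x, scaleC l x)" by (rule N_lam_form)
qed


theorem proposition4p4:
  fixes T :: "'a::{complex_inner_space, complete_space} \<Rightarrow> 'a"
  assumes separable: "\<exists>D::'a set. countable D \<and> closure D = UNIV"
    and infinite_dim: "\<forall>S::'a set. finite S \<longrightarrow> cspan S \<noteq> UNIV"
    and contr: "contraction T"
    and cnu: "completely_non_unitary T"
  shows "(\<forall>l. cmod l < 1 \<longrightarrow>
            N_lam T l = (\<lambda>f. (inv (\<lambda>x. x - scaleC l (cadjoint T x)) f,
                              scaleC l (inv (\<lambda>x. x - scaleC l (cadjoint T x)) f)))
                        ` orth_compl (defect_K T))
       \<and> (\<forall>l. cmod l > 1 \<longrightarrow>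
            N_lam T l = (\<lambda>f. (inv (\<lambda>x. scaleC l x - T x) f,
                              scaleC l (inv (\<lambda>x. scaleC l x - T x) f)))
                        ` orth_compl (defect_K_star T))"
  using part1[OF contr] part2[OF contr] by blast

end
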